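(* Let $M$ be a packed square matrix and $(M_1, M_2)$ be a column (resp. row) decomposition of $M$. Then, there is no integer $i$ such that the $i$th rows (resp. columns) of $M_1$ and $M_2$ contain both a nonzero entry.
   Context: Let $k \geq 1$, $A_k := \{0,1,\dots,k\}$. A ($k$-)packed matrix of size $n$ is an $n \times n$ matrix with entries in $A_k$ having at least one nonzero entry in each row and each column. The compression $\operatorname{cp}(M)$ of a matrix $M$ is the matrix obtained by deleting all null rows and columns of $M$. A tuple $(M_1,\dots,M_r)$ is a column decomposition of $M$ if $M$ is the horizontal juxtaposition $[M_1 | \cdots | M_r]$ and each $\operatorname{cp}(M_i)$ is a square matrix; it is a row decomposition of $M$ if $M$ is the vertical stacking of $M_1, \dots, M_r$ (from top to bottom) and each $\operatorname{cp}(M_i)$ is a square matrix. *)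

theory Defs
  imports "Jordan_Normal_Form.Matrix"
begin

definition packed :: "nat \<Rightarrow> nat \<Rightarrow> nat mat \<Rightarrow> bool" where
  "packed k n M \<longleftrightarrow> dim_row M = n \<and> dim_col M = n
     \<and> (\<forall>i<n. \<forall>j<n. M $$ (i,j) \<in> {0..k})
     \<and> (\<forall>i<n. \<exists>j<n. M $$ (i,j) \<noteq> 0)
     \<and> (\<forall>j<n. \<exists>i<n. M $$ (i,j) \<noteq> 0)"

definition nonnull_rows :: "nat mat \<Rightarrow> nat set" where
  "nonnull_rows M = {i. i < dim_row M \<and> (\<exists>j<dim_col M. M $$ (i,j) \<noteq> 0)}"

definition nonnull_cols :: "nat mat \<Rightarrow> nat set" where
  "nonnull_cols M = {j. j < dim_col M \<and> (\<exists>i<dim_row M. M $$ (i,j) \<noteq> 0)}"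

definition cp :: "nat mat \<Rightarrow> nat mat" where
  "cp M = mat (card (nonnull_rows M)) (card (nonnull_cols M))
      (\<lambda>(i,j). M $$ (sorted_list_of_set (nonnull_rows M) ! i,
                    sorted_list_of_set (nonnull_cols M) ! j))"

definition square :: "'a mat \<Rightarrow> bool" where
  "square A \<longleftrightarrow> dim_row A = dim_col A"

definition hjux :: "'a mat \<Rightarrow> 'a mat \<Rightarrow> 'a mat" where
  "hjux A B = mat (dim_row A) (dim_col A + dim_col B)
     (\<lambda>(i,j). if j < dim_col A then A $$ (i,j) else B $$ (i, j - dim_col A))"

definition vstack :: "'a mat \<Rightarrow> 'a mat \<Rightarrow> 'a mat" where
  "vstack A B = mat (dim_row A + dim_row B) (dim_col A)
     (\<lambda>(i,j). if i < dim_row A then A $$ (i,j) else B $$ (i - dim_row A, j))"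

definition col_decomp2 :: "nat mat \<Rightarrow> nat mat \<Rightarrow> nat mat \<Rightarrow> bool" where
  "col_decomp2 M M1 M2 \<longleftrightarrow> dim_row M1 = dim_row M \<and> dim_row M2 = dim_row M
     \<and> M = hjux M1 M2 \<and> square (cp M1) \<and> square (cp M2)"

definition row_decomp2 :: "nat mat \<Rightarrow> nat mat \<Rightarrow> nat mat \<Rightarrow> bool" where
  "row_decomp2 M M1 M2 \<longleftrightarrow> dim_col M1 = dim_col M \<and> dim_col M2 = dim_col M
     \<and> M = vstack M1 M2 \<and> square (cp M1) \<and> square (cp M2)"

end

theory Submission
  imports Defs
begin

lemma disj_aux:
  assumes "A \<subseteq> {0..<n}" "B \<subseteq> {0..<n}" "{0..<n} \<subseteq> A \<union> B"
    "card A + card B = n" "i \<in> A" "i \<in> B"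
  shows False
proof -
  have fA: "finite A" "finite B" using assms(1,2) finite_subset[of _ "{0..<n}"] by auto
  have "A \<union> B = {0..<n}" using assms by auto
  hence "card (A \<union> B) = n" by simp
  moreover have "card (A \<union> B) + card (A \<inter> B) = card A + card B"
    using card_Un_Int[OF fA] by simp
  ultimately have "card (A \<inter> B) = 0" using assms by simp
  hence "A \<inter> B = {}" using fA by simp
  thus False using assms by auto
qed

lemma col_part:
  assumes "packed k n M" "col_decomp2 M M1 M2"
    "i < dim_row M" "j1 < dim_col M1" "M1 $$ (i,j1) \<noteq> 0"
    "j2 < dim_col M2" "M2 $$ (i,j2) \<noteq> 0"
  shows False
proof -
  define c1 where "c1 = dim_col M1"
  define c2 where "c2 = dim_col M2"
  have dM: "dim_row M = n" "dim_col M = n" using assms(1) unfolding packed_def by auto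
  have M: "M = hjux M1 M2" and r1: "dim_row M1 = n" and r2: "dim_row M2 = n"
    and s1: "square (cp M1)" and s2: "square (cp M2)"
    using assms(2) dM unfolding col_decomp2_def by auto
  have cn: "c1 + c2 = n" using dM M unfolding hjux_def c1_def c2_def by simp
  have ent: "M $$ (i,j) = (if j < c1 then M1 $$ (i,j) else M2 $$ (i, j - c1))"
    if "i < n" "j < n" for i j
    using that M r1 cn unfolding hjux_def c1_def c2_def by simp
  have rows: "\<forall>i<n. \<exists>j<n. M $$ (i,j) \<noteq> 0" and cols: "\<forall>j<n. \<exists>i<n. M $$ (i,j) \<noteq> 0"
    using assms(1) unfolding packed_def by auto
  have nc1: "nonnull_cols M1 = {0..<c1}"
  proof (rule equalityI)
    show "nonnull_cols M1 \<subseteq> {0..<c1}" unfolding nonnull_cols_def c1_def by auto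
  next
    show "{0..<c1} \<subseteq> nonnull_cols M1"
    proof
    fix j assume "j \<in> {0..<c1}"
    hence "j < c1" by simp
    hence "j < n" using cn by simp
    then obtain i where "i < n" "M $$ (i,j) \<noteq> 0" using cols by blast
    thus "j \<in> nonnull_cols M1" using ent[of i j] \<open>j<c1\<close> \<open>j<n\<close> r1 unfolding nonnull_cols_def c1_def by auto
  qed
  qed
  have nc2: "nonnull_cols M2 = {0..<c2}"
  proof (rule equalityI)
    show "nonnull_cols M2 \<subseteq> {0..<c2}" unfolding nonnull_cols_def c2_def by auto
  next
    show "{0..<c2} \<subseteq> nonnull_cols M2"
    proof
    fix j assume "j \<in> {0..<c2}"
    hence "j < c2" by simp
    hence "j+c1 < n" using cn by simp
    then obtain i where "i < n" "M $$ (i,j+c1) \<noteq> 0" using cols by blast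
    thus "j \<in> nonnull_cols M2" using ent[of i "j+c1"] \<open>j<c2\<close> cn r2 unfolding nonnull_cols_def c2_def by auto
  qed
  qed
  have k1: "card (nonnull_rows M1) = c1" using s1 nc1 unfolding square_def cp_def by simp
  have k2: "card (nonnull_rows M2) = c2" using s2 nc2 unfolding square_def cp_def by simp
  have cov: "{0..<n} \<subseteq> nonnull_rows M1 \<union> nonnull_rows M2"
  proof
    fix i assume "i \<in> {0..<n}"
    then obtain j where j: "j < n" "M $$ (i,j) \<noteq> 0" using rows by auto
    show "i \<in> nonnull_rows M1 \<union> nonnull_rows M2"
    proof (cases "j < c1")
      case True thus ?thesis using j ent[of i j] \<open>i \<in> {0..<n}\<close>
        unfolding nonnull_rows_def c1_def r1 by auto
    next
      case False
      hence "j - c1 < c2" using j cn by simp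
      thus ?thesis using j ent[of i j] \<open>i \<in> {0..<n}\<close> False
        unfolding nonnull_rows_def c2_def r2 by auto
    qed
  qed
  show False
    apply (rule disj_aux[of "nonnull_rows M1" n "nonnull_rows M2" i])
    using r1 r2 k1 k2 cn cov assms dM unfolding nonnull_rows_def c1_def c2_def by auto
qed

lemma row_part:
  assumes "packed k n M" "row_decomp2 M M1 M2"
    "j < dim_col M" "i1 < dim_row M1" "M1 $$ (i1,j) \<noteq> 0"
    "i2 < dim_row M2" "M2 $$ (i2,j) \<noteq> 0"
  shows False
proof -
  define c1 where "c1 = dim_row M1"
  define c2 where "c2 = dim_row M2"
  have dM: "dim_row M = n" "dim_col M = n" using assms(1) unfolding packed_def by auto
  have M: "M = vstack M1 M2" and r1: "dim_col M1 = n" and r2: "dim_col M2 = n"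
    and s1: "square (cp M1)" and s2: "square (cp M2)"
    using assms(2) dM unfolding row_decomp2_def by auto
  have cn: "c1 + c2 = n" using dM M unfolding vstack_def c1_def c2_def by simp
  have ent: "M $$ (i,j) = (if i < c1 then M1 $$ (i,j) else M2 $$ (i - c1, j))"
    if "i < n" "j < n" for i j
    using that M r1 cn unfolding vstack_def c1_def c2_def by simp
  have rows: "\<forall>i<n. \<exists>j<n. M $$ (i,j) \<noteq> 0" and cols: "\<forall>j<n. \<exists>i<n. M $$ (i,j) \<noteq> 0"
    using assms(1) unfolding packed_def by auto
  have nc1: "nonnull_rows M1 = {0..<c1}"
  proof (rule equalityI)
    show "nonnull_rows M1 \<subseteq> {0..<c1}" unfolding nonnull_rows_def c1_def by auto
  next
    show "{0..<c1} \<subseteq> nonnull_rows M1"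
    proof
    fix i assume "i \<in> {0..<c1}"
    hence "i < c1" by simp
    hence "i < n" using cn by simp
    then obtain j where "j < n" "M $$ (i,j) \<noteq> 0" using rows by blast
    thus "i \<in> nonnull_rows M1" using ent[of i j] \<open>i<c1\<close> \<open>i<n\<close> r1 unfolding nonnull_rows_def c1_def by auto
  qed
  qed
  have nc2: "nonnull_rows M2 = {0..<c2}"
  proof (rule equalityI)
    show "nonnull_rows M2 \<subseteq> {0..<c2}" unfolding nonnull_rows_def c2_def by auto
  next
    show "{0..<c2} \<subseteq> nonnull_rows M2"
    proof
    fix i assume "i \<in> {0..<c2}"
    hence "i < c2" by simp
    hence "i+c1 < n" using cn by simp
    then obtain j where "j < n" "M $$ (i+c1,j) \<noteq> 0" using rows by blast
    thus "i \<in> nonnull_rows M2" using ent[of "i+c1" j] \<open>i<c2\<close> cn r2 unfolding nonnull_rows_def c2_def by auto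
  qed
  qed
  have k1: "card (nonnull_cols M1) = c1" using s1 nc1 unfolding square_def cp_def by simp
  have k2: "card (nonnull_cols M2) = c2" using s2 nc2 unfolding square_def cp_def by simp
  have cov: "{0..<n} \<subseteq> nonnull_cols M1 \<union> nonnull_cols M2"
  proof
    fix j assume "j \<in> {0..<n}"
    then obtain i where i: "i < n" "M $$ (i,j) \<noteq> 0" using cols by auto
    show "j \<in> nonnull_cols M1 \<union> nonnull_cols M2"
    proof (cases "i < c1")
      case True thus ?thesis using i ent[of i j] \<open>j \<in> {0..<n}\<close>
        unfolding nonnull_cols_def c1_def r1 by auto
    next
      case False
      hence "i - c1 < c2" using i cn by simp
      thus ?thesis using i ent[of i j] \<open>j \<in> {0..<n}\<close> False
        unfolding nonnull_cols_def c2_def r2 by auto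
    qed
  qed
  show False
    apply (rule disj_aux[of "nonnull_cols M1" n "nonnull_cols M2" j])
    using r1 r2 k1 k2 cn cov assms dM unfolding nonnull_cols_def c1_def c2_def by auto
qed

theorem lemma1p1:
  fixes k n :: nat and M M1 M2 :: "nat mat"
  assumes "k \<ge> 1" and "packed k n M"
  shows "(col_decomp2 M M1 M2 \<longrightarrow>
           \<not> (\<exists>i. i < dim_row M \<and> (\<exists>j<dim_col M1. M1 $$ (i,j) \<noteq> 0)
                                 \<and> (\<exists>j<dim_col M2. M2 $$ (i,j) \<noteq> 0)))
       \<and> (row_decomp2 M M1 M2 \<longrightarrow>
           \<not> (\<exists>j. j < dim_col M \<and> (\<exists>i<dim_row M1. M1 $$ (i,j) \<noteq> 0)
                                 \<and> (\<exists>i<dim_row M2. M2 $$ (i,j) \<noteq> 0)))"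
  using col_part[OF assms(2)] row_part[OF assms(2)] by blast

end
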